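(* In the base model with AI prior $N(\mu_A,\sigma_A^2)$, define the societal bias $|\mathbb E[\theta^\star]-\mu_T|$ (with $\theta\sim N(\mu_T,\sigma_T^2)$) and the AI bias $|\mu_A-\mu_T|$. Then: (1) $|\mathbb E[\theta^\star]-\mu_T|\le|\mu_A-\mu_T|$; (2) $|\mathbb E[\theta^\star]-\mu_T|\to0$ as $\gamma\to0$ (for any $\Gamma$), and also as $\Gamma\to0$ (for any $\gamma$); (3) if $\Gamma=\infty$, then $|\mathbb E[\theta^\star]-\mu_T|\to|\mu_A-\mu_T|$ as $\gamma\to\infty$; (4) if $\Gamma=\infty$, the societal bias is non-decreasing in $\gamma$.
   Context: Base model. Fix $\mu_T\in\mathbb R$, $\sigma_T>0$, $\mu_A\in\mathbb R$, $\sigma_A>0$, $\gamma>0$ (cost of human–AI interaction) and $\Gamma\in(0,\infty]$ (utility cost of doing the task without AI). User preferences $\theta$ are distributed in the population as $N(\mu_T,\sigma_T^2)$ with density $\pi_T$. A user of type $\theta$ chooses a noise level $\sigma\in[0,\infty]$; the AI observes $s=\theta+\varepsilon$, $\varepsilon\sim N(0,\sigma^2)$, and outputs the posterior mean under the prior $N(\mu_A,\sigma_A^2)$: $\theta_A(s,\sigma)=\frac{\sigma_A^2}{\sigma_A^2+\sigma^2}s+\frac{\sigma^2}{\sigma_A^2+\sigma^2}\mu_A$ (with $\theta_A=\mu_A$ when $\sigma=\infty$). Fidelity error: $E(\theta,\sigma)=\mathbb E_{s\sim N(\theta,\sigma^2)}[(\theta_A(s,\sigma)-\theta)^2]$. Communication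 cost: $I(\sigma)=-\tfrac12\ln\frac{\sigma^2}{\sigma_T^2+\sigma^2}$, with $I(0)=+\infty$, $I(\infty)=0$. Loss: $L(\theta,\sigma)=E(\theta,\sigma)+\gamma I(\sigma)$, and $\sigma^\star(\theta)\in\arg\min_{\sigma\in[0,\infty]}L(\theta,\sigma)$. The user uses the AI iff $L(\theta,\sigma^\star(\theta))\le\Gamma$; the chosen output is $\theta^\star=\theta_A(s,\sigma^\star(\theta))$ with $s\sim N(\theta,\sigma^\star(\theta)^2)$ if she uses the AI, and $\theta^\star=\theta$ otherwise. $\Gamma=\infty$ means everyone uses the AI. $\mathbb E[\theta^\star]$ is taken over $\theta\sim\pi_T$ and $s$. *)

theory Defs
  imports "HOL-Probability.Probability"
begin

text \<open>Noise levels sigma range over [0, infinity], modelled as nonnegative extended reals.\<close>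

text \<open>Distribution of the signal s = theta + eps, eps ~ N(0, sigma^2), for finite sigma
  (degenerate point mass when sigma = 0).\<close>
definition signal_dist :: "real \<Rightarrow> ereal \<Rightarrow> real measure" where
  "signal_dist \<theta> \<sigma> =
     (if \<sigma> = 0 then return borel \<theta>
      else density lborel (normal_density \<theta> (real_of_ereal \<sigma>)))"

text \<open>AI output: posterior mean under prior N(muA, sigmaA^2); equals muA when sigma = infinity.\<close>
definition thetaA :: "real \<Rightarrow> real \<Rightarrow> real \<Rightarrow> ereal \<Rightarrow> real" where
  "thetaA \<mu>A \<sigma>A s \<sigma> =
     (if \<sigma> = \<infinity> then \<mu>A
      else (let v = (real_of_ereal \<sigma>)\<^sup>2 in
             \<sigma>A\<^sup>2 / (\<sigma>A\<^sup>2 + v) * s + v / (\<sigma>A\<^sup>2 + v) * \<mu>A))"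

definition fid_err :: "real \<Rightarrow> real \<Rightarrow> real \<Rightarrow> ereal \<Rightarrow> real" where
  "fid_err \<mu>A \<sigma>A \<theta> \<sigma> =
     (if \<sigma> = \<infinity> then (\<mu>A - \<theta>)\<^sup>2
      else \<integral> s. (thetaA \<mu>A \<sigma>A s \<sigma> - \<theta>)\<^sup>2 \<partial>signal_dist \<theta> \<sigma>)"

definition comm_cost :: "real \<Rightarrow> ereal \<Rightarrow> ereal" where
  "comm_cost \<sigma>T \<sigma> =
     (if \<sigma> = 0 then \<infinity>
      else if \<sigma> = \<infinity> then 0
      else ereal (- 1/2 * ln ((real_of_ereal \<sigma>)\<^sup>2 / (\<sigma>T\<^sup>2 + (real_of_ereal \<sigma>)\<^sup>2))))"

definition loss :: "real \<Rightarrow> real \<Rightarrow> real \<Rightarrow> real \<Rightarrow> real \<Rightarrow> ereal \<Rightarrow> ereal" where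
  "loss \<sigma>T \<mu>A \<sigma>A \<gamma> \<theta> \<sigma> = ereal (fid_err \<mu>A \<sigma>A \<theta> \<sigma>) + ereal \<gamma> * comm_cost \<sigma>T \<sigma>"

definition is_opt_noise :: "real \<Rightarrow> real \<Rightarrow> real \<Rightarrow> real \<Rightarrow> real \<Rightarrow> ereal \<Rightarrow> bool" where
  "is_opt_noise \<sigma>T \<mu>A \<sigma>A \<gamma> \<theta> \<sigma> \<longleftrightarrow>
     0 \<le> \<sigma> \<and> (\<forall>\<sigma>'. 0 \<le> \<sigma>' \<longrightarrow> loss \<sigma>T \<mu>A \<sigma>A \<gamma> \<theta> \<sigma> \<le> loss \<sigma>T \<mu>A \<sigma>A \<gamma> \<theta> \<sigma>')"

text \<open>Conditional mean of theta* given the user type theta, for a chosen noise level sig: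
  E_s[thetaA(s, sig)] if she uses the AI (L <= Gamma), theta otherwise.\<close>
definition cond_out_mean ::
  "real \<Rightarrow> real \<Rightarrow> real \<Rightarrow> real \<Rightarrow> ereal \<Rightarrow> real \<Rightarrow> ereal \<Rightarrow> real" where
  "cond_out_mean \<sigma>T \<mu>A \<sigma>A \<gamma> \<Gamma> \<theta> sig =
     (if loss \<sigma>T \<mu>A \<sigma>A \<gamma> \<theta> sig \<le> \<Gamma>
      then (if sig = \<infinity> then \<mu>A
            else \<integral> s. thetaA \<mu>A \<sigma>A s sig \<partial>signal_dist \<theta> sig)
      else \<theta>)"

definition mean_out ::
  "real \<Rightarrow> real \<Rightarrow> real \<Rightarrow> real \<Rightarrow> real \<Rightarrow> ereal \<Rightarrow> (real \<Rightarrow> ereal) \<Rightarrow> real" where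
  "mean_out \<mu>T \<sigma>T \<mu>A \<sigma>A \<gamma> \<Gamma> sel =
     (\<integral> \<theta>. cond_out_mean \<sigma>T \<mu>A \<sigma>A \<gamma> \<Gamma> \<theta> (sel \<theta>) \<partial>density lborel (normal_density \<mu>T \<sigma>T))"

definition soc_bias ::
  "real \<Rightarrow> real \<Rightarrow> real \<Rightarrow> real \<Rightarrow> real \<Rightarrow> ereal \<Rightarrow> (real \<Rightarrow> ereal) \<Rightarrow> real" where
  "soc_bias \<mu>T \<sigma>T \<mu>A \<sigma>A \<gamma> \<Gamma> sel = \<bar>mean_out \<mu>T \<sigma>T \<mu>A \<sigma>A \<gamma> \<Gamma> sel - \<mu>T\<bar>"

end

theory Submission
  imports Defs "HOL-Real_Asymp.Real_Asymp"
begin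
lemma int_sig1:
  assumes s: "s > 0"
  shows "(\<integral>x. c1 * x + c2 \<partial>density lborel (normal_density \<theta> s)) = c1 * \<theta> + c2"
proof -
  have "(\<integral>x. c1 * x + c2 \<partial>density lborel (normal_density \<theta> s))
      = (\<integral>x. normal_density \<theta> s x * (c1 * x + c2) \<partial>lborel)"
    by (subst integral_density) auto
  also have "\<dots> = (\<integral>x. c1 * (normal_density \<theta> s x * x) + c2 * normal_density \<theta> s x \<partial>lborel)"
    by (simp add: algebra_simps)
  also have "\<dots> = c1 * \<theta> + c2"
    using s integrable_normal_moment_nz_1[of s \<theta>] integral_normal_moment_nz_1[of s \<theta>]
    by (simp add: integrable_normal_density)
  finally show ?thesis .
qed

lemma int_sig2:
  assumes s: "s > 0"
  shows "(\<integral>x. (w * (x - \<theta>) + c)\<^sup>2 \<partial>density lborel (normal_density \<theta> s)) = w\<^sup>2 * s\<^sup>2 + c\<^sup>2"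
proof -
  have "(\<integral>x. (w * (x - \<theta>) + c)\<^sup>2 \<partial>density lborel (normal_density \<theta> s))
      = (\<integral>x. normal_density \<theta> s x * (w * (x - \<theta>) + c)\<^sup>2 \<partial>lborel)"
    by (subst integral_density) auto
  also have "\<dots> = (\<integral>x. w\<^sup>2 * (normal_density \<theta> s x * (x - \<theta>)^(2*1)) + 2*w*c * (normal_density \<theta> s x * (x - \<theta>)^(2*0+1))
      + c\<^sup>2 * normal_density \<theta> s x \<partial>lborel)"
    by (simp add: algebra_simps power2_eq_square)
  also have "\<dots> = w\<^sup>2 * s\<^sup>2 + c\<^sup>2"
    using s integrable_normal_moment[of s \<theta> "2*1"] integrable_normal_moment[of s \<theta> "2*0+1"]
     integral_normal_moment_even[of s \<theta> 1] integral_normal_moment_odd[of s \<theta> 0]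
    by (simp add: integrable_normal_density power2_eq_square)
  finally show ?thesis .
qed

definition tt :: "real \<Rightarrow> ereal \<Rightarrow> real" where
  "tt \<sigma>A \<sigma> = (if \<sigma> = \<infinity> then 1 else (real_of_ereal \<sigma>)\<^sup>2 / (\<sigma>A\<^sup>2 + (real_of_ereal \<sigma>)\<^sup>2))"
definition ww :: "real \<Rightarrow> ereal \<Rightarrow> real" where
  "ww \<sigma>A \<sigma> = (if \<sigma> = \<infinity> then 0 else (\<sigma>A\<^sup>2 / (\<sigma>A\<^sup>2 + (real_of_ereal \<sigma>)\<^sup>2))\<^sup>2 * (real_of_ereal \<sigma>)\<^sup>2)"
definition cc :: "real \<Rightarrow> ereal \<Rightarrow> real" where
  "cc \<sigma>T \<sigma> = (if \<sigma> = \<infinity> then 0 else - 1/2 * ln ((real_of_ereal \<sigma>)\<^sup>2 / (\<sigma>T\<^sup>2 + (real_of_ereal \<sigma>)\<^sup>2)))"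
definition Lr :: "real \<Rightarrow> real \<Rightarrow> real \<Rightarrow> real \<Rightarrow> real \<Rightarrow> ereal \<Rightarrow> real" where
  "Lr \<sigma>T \<mu>A \<sigma>A \<gamma> \<theta> \<sigma> = (tt \<sigma>A \<sigma>)\<^sup>2 * (\<mu>A - \<theta>)\<^sup>2 + ww \<sigma>A \<sigma> + \<gamma> * cc \<sigma>T \<sigma>"

lemma meas_tt[measurable]: "tt \<sigma>A \<in> borel_measurable borel"
  unfolding tt_def by measurable
lemma meas_ww[measurable]: "ww \<sigma>A \<in> borel_measurable borel"
  unfolding ww_def by measurable
lemma meas_cc[measurable]: "cc \<sigma>T \<in> borel_measurable borel"
  unfolding cc_def by measurable

lemma fid_err_eq:
  assumes sA: "\<sigma>A > 0" and pos: "\<sigma> > 0"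
  shows "fid_err \<mu>A \<sigma>A \<theta> \<sigma> = (tt \<sigma>A \<sigma>)\<^sup>2 * (\<mu>A - \<theta>)\<^sup>2 + ww \<sigma>A \<sigma>"
proof (cases "\<sigma> = \<infinity>")
  case True then show ?thesis by (simp add: fid_err_def tt_def ww_def power2_commute)
next
  case False
  then obtain s where s: "\<sigma> = ereal s" "s > 0" using pos by (cases \<sigma>) auto
  define w where "w = \<sigma>A\<^sup>2 / (\<sigma>A\<^sup>2 + s\<^sup>2)"
  define t where "t = s\<^sup>2 / (\<sigma>A\<^sup>2 + s\<^sup>2)"
  have pos2: "\<sigma>A\<^sup>2 + s\<^sup>2 > 0" using sA by (simp add: add_pos_nonneg)
  have eq: "thetaA \<mu>A \<sigma>A x (ereal s) - \<theta> = w * (x - \<theta>) + t * (\<mu>A - \<theta>)" for x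
    using pos2 using sA s by (simp add: thetaA_def s w_def t_def Let_def divide_simps) (simp add: algebra_simps)
  have "fid_err \<mu>A \<sigma>A \<theta> \<sigma> = (\<integral>x. (w * (x - \<theta>) + t * (\<mu>A - \<theta>))\<^sup>2 \<partial>density lborel (normal_density \<theta> s))"
    using s False by (simp add: fid_err_def signal_dist_def eq del: ereal_less_eq)
  also have "\<dots> = w\<^sup>2 * s\<^sup>2 + (t * (\<mu>A - \<theta>))\<^sup>2" using int_sig2 s(2) by blast
  finally show ?thesis using s by (simp add: tt_def ww_def w_def t_def power_mult_distrib power_divide)
qed

lemma cond_int_eq:
  assumes sA: "\<sigma>A > 0" and s: "s > 0"
  shows "(\<integral>x. thetaA \<mu>A \<sigma>A x (ereal s) \<partial>signal_dist \<theta> (ereal s)) = \<theta> + tt \<sigma>A (ereal s) * (\<mu>A - \<theta>)"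
proof -
  have pos2: "\<sigma>A\<^sup>2 + s\<^sup>2 > 0" using sA by (simp add: add_pos_nonneg)
  have "(\<integral>x. thetaA \<mu>A \<sigma>A x (ereal s) \<partial>signal_dist \<theta> (ereal s)) =
     (\<integral>x. (\<sigma>A\<^sup>2 / (\<sigma>A\<^sup>2 + s\<^sup>2)) * x + (s\<^sup>2 / (\<sigma>A\<^sup>2 + s\<^sup>2)) * \<mu>A \<partial>density lborel (normal_density \<theta> s))"
    using s by (simp add: signal_dist_def thetaA_def Let_def)
  also have "\<dots> = (\<sigma>A\<^sup>2 / (\<sigma>A\<^sup>2 + s\<^sup>2)) * \<theta> + (s\<^sup>2 / (\<sigma>A\<^sup>2 + s\<^sup>2)) * \<mu>A"
    by (rule int_sig1[OF s])
  also have "\<dots> = \<theta> + tt \<sigma>A (ereal s) * (\<mu>A - \<theta>)"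
    using pos2 sA s by (simp add: tt_def divide_simps) (simp add: algebra_simps)
  finally show ?thesis .
qed

lemma loss_eq:
  assumes sA: "\<sigma>A > 0" and pos: "\<sigma> > 0"
  shows "loss \<sigma>T \<mu>A \<sigma>A \<gamma> \<theta> \<sigma> = ereal (Lr \<sigma>T \<mu>A \<sigma>A \<gamma> \<theta> \<sigma>)"
  using pos by (auto simp: loss_def fid_err_eq[OF sA pos] Lr_def comm_cost_def cc_def)

context
  fixes \<sigma>T \<mu>A \<sigma>A :: real
  assumes sT: "\<sigma>T > 0" and sA: "\<sigma>A > 0"
begin

lemma tt_bounds: assumes "\<sigma> > 0" shows "0 \<le> tt \<sigma>A \<sigma>" "tt \<sigma>A \<sigma> \<le> 1"
  using sA by (auto simp: tt_def divide_simps add_pos_nonneg)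

lemma ww_nonneg: "0 \<le> ww \<sigma>A \<sigma>"
  by (simp add: ww_def)

lemma cc_nonneg: assumes "\<sigma> > 0" shows "0 \<le> cc \<sigma>T \<sigma>"
proof (cases "\<sigma> = \<infinity>")
  case False
  then obtain s where s: "\<sigma> = ereal s" "s > 0" using assms by (cases \<sigma>) auto
  have "s\<^sup>2 / (\<sigma>T\<^sup>2 + s\<^sup>2) \<le> 1" using sT by (simp add: divide_simps add_pos_nonneg)
  moreover have "s\<^sup>2 / (\<sigma>T\<^sup>2 + s\<^sup>2) > 0" using sT s by (simp add: add_pos_nonneg)
  ultimately have "ln (s\<^sup>2 / (\<sigma>T\<^sup>2 + s\<^sup>2)) \<le> 0" by simp
  then show ?thesis using s by (simp add: cc_def)
qed (simp add: cc_def)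

lemma Lr_ge: assumes "\<sigma> > 0" "\<gamma> \<ge> 0"
  shows "(tt \<sigma>A \<sigma>)\<^sup>2 * (\<mu>A - \<theta>)\<^sup>2 \<le> Lr \<sigma>T \<mu>A \<sigma>A \<gamma> \<theta> \<sigma>"
  using ww_nonneg[of \<sigma>] cc_nonneg[OF assms(1)] assms(2) by (simp add: Lr_def)

lemma opt_facts:
  assumes g: "\<gamma> > 0" and o: "is_opt_noise \<sigma>T \<mu>A \<sigma>A \<gamma> \<theta> \<sigma>"
  shows "\<sigma> > 0" "\<And>\<sigma>'. \<sigma>' > 0 \<Longrightarrow> Lr \<sigma>T \<mu>A \<sigma>A \<gamma> \<theta> \<sigma> \<le> Lr \<sigma>T \<mu>A \<sigma>A \<gamma> \<theta> \<sigma>'"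
proof -
  have ge: "0 \<le> \<sigma>" and le: "\<And>\<sigma>'. 0 \<le> \<sigma>' \<Longrightarrow> loss \<sigma>T \<mu>A \<sigma>A \<gamma> \<theta> \<sigma> \<le> loss \<sigma>T \<mu>A \<sigma>A \<gamma> \<theta> \<sigma>'"
    using o by (auto simp: is_opt_noise_def)
  have "\<sigma> \<noteq> 0"
  proof
    assume z: "\<sigma> = 0"
    have "loss \<sigma>T \<mu>A \<sigma>A \<gamma> \<theta> 0 = \<infinity>"
      using g by (simp add: loss_def comm_cost_def)
    moreover have "loss \<sigma>T \<mu>A \<sigma>A \<gamma> \<theta> \<infinity> = ereal (Lr \<sigma>T \<mu>A \<sigma>A \<gamma> \<theta> \<infinity>)"
      using loss_eq[OF sA] by simp
    ultimately show False using le[of \<infinity>] z by simp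
  qed
  then show pos: "\<sigma> > 0" using ge by simp
  fix \<sigma>' :: ereal assume "\<sigma>' > 0"
  then show "Lr \<sigma>T \<mu>A \<sigma>A \<gamma> \<theta> \<sigma> \<le> Lr \<sigma>T \<mu>A \<sigma>A \<gamma> \<theta> \<sigma>'"
    using le[of \<sigma>'] loss_eq[OF sA pos] loss_eq[OF sA \<open>\<sigma>' > 0\<close>] by simp
qed

lemma loss_sym:
  assumes g: "\<gamma> > 0" and "\<sigma> \<ge> 0" and d: "(\<mu>A - \<theta>)\<^sup>2 = (\<mu>A - \<theta>')\<^sup>2"
  shows "loss \<sigma>T \<mu>A \<sigma>A \<gamma> \<theta> \<sigma> = loss \<sigma>T \<mu>A \<sigma>A \<gamma> \<theta>' \<sigma>"
proof (cases "\<sigma> = 0")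
  case True then show ?thesis using g by (simp add: loss_def comm_cost_def)
next
  case False
  then have "\<sigma> > 0" using assms(2) by simp
  then show ?thesis using loss_eq[OF sA] d by (simp add: Lr_def)
qed

lemma opt_sym:
  assumes g: "\<gamma> > 0" and d: "(\<mu>A - \<theta>)\<^sup>2 = (\<mu>A - \<theta>')\<^sup>2"
    and o: "is_opt_noise \<sigma>T \<mu>A \<sigma>A \<gamma> \<theta> \<sigma>"
  shows "is_opt_noise \<sigma>T \<mu>A \<sigma>A \<gamma> \<theta>' \<sigma>"
  using o loss_sym[OF g _ d] unfolding is_opt_noise_def by auto

lemma cond_eq:
  assumes "\<sigma> > 0"
  shows "cond_out_mean \<sigma>T \<mu>A \<sigma>A \<gamma> \<Gamma> \<theta> \<sigma> =
     \<theta> - (if loss \<sigma>T \<mu>A \<sigma>A \<gamma> \<theta> \<sigma> \<le> \<Gamma> then tt \<sigma>A \<sigma> else 0) * (\<theta> - \<mu>A)"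
proof (cases "\<sigma> = \<infinity>")
  case True then show ?thesis by (simp add: cond_out_mean_def tt_def)
next
  case False
  then obtain s where s: "\<sigma> = ereal s" "s > 0" using assms by (cases \<sigma>) auto
  show ?thesis using cond_int_eq[OF sA s(2)] s by (simp add: cond_out_mean_def algebra_simps)
qed

lemma opt_mono_d:
  assumes g: "\<gamma> > 0" and o1: "is_opt_noise \<sigma>T \<mu>A \<sigma>A \<gamma> \<theta>1 \<sigma>1"
    and o2: "is_opt_noise \<sigma>T \<mu>A \<sigma>A \<gamma> \<theta>2 \<sigma>2"
    and lt: "(\<mu>A - \<theta>1)\<^sup>2 < (\<mu>A - \<theta>2)\<^sup>2"
  shows "tt \<sigma>A \<sigma>2 \<le> tt \<sigma>A \<sigma>1"
proof -
  note p1 = opt_facts[OF g o1] and p2 = opt_facts[OF g o2]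
  have a: "Lr \<sigma>T \<mu>A \<sigma>A \<gamma> \<theta>1 \<sigma>1 \<le> Lr \<sigma>T \<mu>A \<sigma>A \<gamma> \<theta>1 \<sigma>2" using p1 p2 by blast
  have b: "Lr \<sigma>T \<mu>A \<sigma>A \<gamma> \<theta>2 \<sigma>2 \<le> Lr \<sigma>T \<mu>A \<sigma>A \<gamma> \<theta>2 \<sigma>1" using p1 p2 by blast
  have "(tt \<sigma>A \<sigma>2)\<^sup>2 * ((\<mu>A - \<theta>2)\<^sup>2 - (\<mu>A - \<theta>1)\<^sup>2) \<le> (tt \<sigma>A \<sigma>1)\<^sup>2 * ((\<mu>A - \<theta>2)\<^sup>2 - (\<mu>A - \<theta>1)\<^sup>2)"
    using a b by (simp add: Lr_def algebra_simps)
  then have "(tt \<sigma>A \<sigma>2)\<^sup>2 \<le> (tt \<sigma>A \<sigma>1)\<^sup>2" using lt by simp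
  then show ?thesis using tt_bounds[OF p1(1)] tt_bounds[OF p2(1)] by (simp add: power2_le_iff_abs_le)
qed

lemma cc_tt_mono:
  assumes p1: "\<sigma>1 > 0" and p2: "\<sigma>2 > 0" and le: "cc \<sigma>T \<sigma>2 \<le> cc \<sigma>T \<sigma>1"
  shows "tt \<sigma>A \<sigma>1 \<le> tt \<sigma>A \<sigma>2"
proof (cases "\<sigma>2 = \<infinity>")
  case True then show ?thesis using tt_bounds[OF p1] by (simp add: tt_def)
next
  case F2: False
  then obtain s2 where s2: "\<sigma>2 = ereal s2" "s2 > 0" using p2 by (cases \<sigma>2) auto
  have q2: "0 < s2\<^sup>2 / (\<sigma>T\<^sup>2 + s2\<^sup>2)" "s2\<^sup>2 / (\<sigma>T\<^sup>2 + s2\<^sup>2) < 1"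
    using sT s2 by (auto simp: divide_simps add_pos_nonneg)
  show ?thesis
  proof (cases "\<sigma>1 = \<infinity>")
    case True
    have "ln (s2\<^sup>2 / (\<sigma>T\<^sup>2 + s2\<^sup>2)) < 0" using q2 by simp
    then show ?thesis using le True s2 by (simp add: cc_def)
  next
    case False
    then obtain s1 where s1: "\<sigma>1 = ereal s1" "s1 > 0" using p1 by (cases \<sigma>1) auto
    have q1: "0 < s1\<^sup>2 / (\<sigma>T\<^sup>2 + s1\<^sup>2)"
      using sT s1 by (auto simp: divide_simps add_pos_nonneg)
    have "ln (s1\<^sup>2 / (\<sigma>T\<^sup>2 + s1\<^sup>2)) \<le> ln (s2\<^sup>2 / (\<sigma>T\<^sup>2 + s2\<^sup>2))"
      using le s1 s2 by (simp add: cc_def)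
    then have "s1\<^sup>2 / (\<sigma>T\<^sup>2 + s1\<^sup>2) \<le> s2\<^sup>2 / (\<sigma>T\<^sup>2 + s2\<^sup>2)" using q1 q2 by simp
    then have "s1\<^sup>2 * (\<sigma>T\<^sup>2 + s2\<^sup>2) \<le> s2\<^sup>2 * (\<sigma>T\<^sup>2 + s1\<^sup>2)"
      using sT by (simp add: divide_simps add_pos_nonneg)
    then have "\<sigma>T\<^sup>2 * s1\<^sup>2 \<le> \<sigma>T\<^sup>2 * s2\<^sup>2" by (simp add: algebra_simps)
    then have v: "s1\<^sup>2 \<le> s2\<^sup>2" using sT by simp
    have "s1\<^sup>2 * (\<sigma>A\<^sup>2 + s2\<^sup>2) \<le> s2\<^sup>2 * (\<sigma>A\<^sup>2 + s1\<^sup>2)"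
      using v mult_left_mono[OF v, of "\<sigma>A\<^sup>2"] by (simp add: algebra_simps)
    then show ?thesis using s1 s2 sA by (simp add: tt_def divide_simps add_pos_nonneg)
  qed
qed

lemma opt_mono_g:
  assumes g: "0 < \<gamma>1" "\<gamma>1 < \<gamma>2" and o1: "is_opt_noise \<sigma>T \<mu>A \<sigma>A \<gamma>1 \<theta> \<sigma>1"
    and o2: "is_opt_noise \<sigma>T \<mu>A \<sigma>A \<gamma>2 \<theta> \<sigma>2"
  shows "tt \<sigma>A \<sigma>1 \<le> tt \<sigma>A \<sigma>2"
proof -
  have g2: "\<gamma>2 > 0" using g by simp
  note p1 = opt_facts[OF g(1) o1] and p2 = opt_facts[OF g2 o2]
  have a: "Lr \<sigma>T \<mu>A \<sigma>A \<gamma>1 \<theta> \<sigma>1 \<le> Lr \<sigma>T \<mu>A \<sigma>A \<gamma>1 \<theta> \<sigma>2" using p1 p2 by blast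
  have b: "Lr \<sigma>T \<mu>A \<sigma>A \<gamma>2 \<theta> \<sigma>2 \<le> Lr \<sigma>T \<mu>A \<sigma>A \<gamma>2 \<theta> \<sigma>1" using p1 p2 by blast
  have "(\<gamma>2 - \<gamma>1) * cc \<sigma>T \<sigma>2 \<le> (\<gamma>2 - \<gamma>1) * cc \<sigma>T \<sigma>1"
    using a b by (simp add: Lr_def algebra_simps)
  then have "cc \<sigma>T \<sigma>2 \<le> cc \<sigma>T \<sigma>1" using g by simp
  then show ?thesis using cc_tt_mono p1(1) p2(1) by blast
qed

lemma opt_bound_sqrt:
  assumes g: "\<gamma> > 0" and o: "is_opt_noise \<sigma>T \<mu>A \<sigma>A \<gamma> \<theta> \<sigma>" and s': "\<sigma>' > 0"
  shows "tt \<sigma>A \<sigma> * \<bar>\<theta> - \<mu>A\<bar> \<le> sqrt (Lr \<sigma>T \<mu>A \<sigma>A \<gamma> \<theta> \<sigma>')"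
proof -
  note p = opt_facts[OF g o]
  have "(tt \<sigma>A \<sigma> * \<bar>\<theta> - \<mu>A\<bar>)\<^sup>2 \<le> Lr \<sigma>T \<mu>A \<sigma>A \<gamma> \<theta> \<sigma>'"
    using Lr_ge[OF p(1), of \<gamma> \<theta>] p(2)[OF s'] g
    by (simp add: power_mult_distrib power2_commute)
  then show ?thesis using tt_bounds[OF p(1)] by (simp add: real_le_rsqrt)
qed

lemma opt_bound_Gamma:
  assumes g: "\<gamma> > 0" and o: "is_opt_noise \<sigma>T \<mu>A \<sigma>A \<gamma> \<theta> \<sigma>"
    and L: "ereal (Lr \<sigma>T \<mu>A \<sigma>A \<gamma> \<theta> \<sigma>) \<le> ereal G"
  shows "tt \<sigma>A \<sigma> * \<bar>\<theta> - \<mu>A\<bar> \<le> sqrt G"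
proof -
  note p = opt_facts[OF g o]
  have "(tt \<sigma>A \<sigma> * \<bar>\<theta> - \<mu>A\<bar>)\<^sup>2 \<le> G"
    using Lr_ge[OF p(1), of \<gamma> \<theta>] L g
    by (simp add: power_mult_distrib power2_commute)
  then show ?thesis using tt_bounds[OF p(1)] by (simp add: real_le_rsqrt)
qed

lemma opt_bound_large:
  assumes g: "\<gamma> > 0" and o: "is_opt_noise \<sigma>T \<mu>A \<sigma>A \<gamma> \<theta> \<sigma>"
  shows "(1 - tt \<sigma>A \<sigma>) * \<bar>\<theta> - \<mu>A\<bar> \<le> (2 * (\<sigma>A\<^sup>2 + \<sigma>T\<^sup>2) / \<sigma>T\<^sup>2) * \<bar>\<theta> - \<mu>A\<bar>^3 / \<gamma>"
proof (cases "\<sigma> = \<infinity>")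
  case True then show ?thesis using g sT by (simp add: tt_def)
next
  case False
  note p = opt_facts[OF g o]
  obtain s where s: "\<sigma> = ereal s" "s > 0" using p(1) False by (cases \<sigma>) auto
  define d where "d = (\<theta> - \<mu>A)\<^sup>2"
  define v where "v = s\<^sup>2"
  have v: "v > 0" using s by (simp add: v_def)
  have "Lr \<sigma>T \<mu>A \<sigma>A \<gamma> \<theta> \<sigma> \<le> Lr \<sigma>T \<mu>A \<sigma>A \<gamma> \<theta> \<infinity>" using p(2) by simp
  moreover have "Lr \<sigma>T \<mu>A \<sigma>A \<gamma> \<theta> \<infinity> = d" by (simp add: Lr_def tt_def ww_def cc_def d_def power2_commute)
  moreover have "\<gamma> * cc \<sigma>T \<sigma> \<le> Lr \<sigma>T \<mu>A \<sigma>A \<gamma> \<theta> \<sigma>"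
    using ww_nonneg[of \<sigma>] by (simp add: Lr_def)
  ultimately have gc: "\<gamma> * cc \<sigma>T \<sigma> \<le> d" by linarith
  define q where "q = v / (\<sigma>T\<^sup>2 + v)"
  have den: "\<sigma>T\<^sup>2 + v > 0" using v sT by (simp add: add_pos_pos)
  have q: "q > 0" using v den by (simp add: q_def)
  have cq: "cc \<sigma>T \<sigma> = - 1/2 * ln q" using s False by (simp add: cc_def q_def v_def)
  have "ln q \<le> q - 1" using q by (rule ln_le_minus_one)
  moreover have "1 - q = \<sigma>T\<^sup>2 / (\<sigma>T\<^sup>2 + v)" using den by (simp add: q_def field_simps)
  ultimately have "\<sigma>T\<^sup>2 / (\<sigma>T\<^sup>2 + v) \<le> 2 * cc \<sigma>T \<sigma>" using cq by simp
  then have "\<gamma> * (\<sigma>T\<^sup>2 / (\<sigma>T\<^sup>2 + v)) \<le> 2 * d"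
  proof -
    assume h: "\<sigma>T\<^sup>2 / (\<sigma>T\<^sup>2 + v) \<le> 2 * cc \<sigma>T \<sigma>"
    have "\<gamma> * (\<sigma>T\<^sup>2 / (\<sigma>T\<^sup>2 + v)) \<le> \<gamma> * (2 * cc \<sigma>T \<sigma>)"
      using mult_left_mono[OF h, of \<gamma>] g by simp
    then show ?thesis using gc by linarith
  qed
  then have A: "1 / (\<sigma>T\<^sup>2 + v) \<le> 2 * d / (\<gamma> * \<sigma>T\<^sup>2)"
    using g sT den by (simp add: divide_simps mult.commute mult.left_commute)
  have B: "1 - tt \<sigma>A \<sigma> \<le> (\<sigma>A\<^sup>2 + \<sigma>T\<^sup>2) / (\<sigma>T\<^sup>2 + v)"
  proof -
    have e: "1 - tt \<sigma>A \<sigma> = \<sigma>A\<^sup>2 / (\<sigma>A\<^sup>2 + v)"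
      using s False sA v by (simp add: tt_def v_def divide_simps)
    have "\<sigma>A\<^sup>2 * (\<sigma>T\<^sup>2 + v) \<le> (\<sigma>A\<^sup>2 + \<sigma>T\<^sup>2) * (\<sigma>A\<^sup>2 + v)"
      using v by (simp add: algebra_simps)
    then show ?thesis unfolding e using den sA v
      by (simp add: divide_simps add_pos_pos)
  qed
  have "1 - tt \<sigma>A \<sigma> \<le> (\<sigma>A\<^sup>2 + \<sigma>T\<^sup>2) * (2 * d / (\<gamma> * \<sigma>T\<^sup>2))"
  proof -
    have "(\<sigma>A\<^sup>2 + \<sigma>T\<^sup>2) / (\<sigma>T\<^sup>2 + v) = (\<sigma>A\<^sup>2 + \<sigma>T\<^sup>2) * (1 / (\<sigma>T\<^sup>2 + v))" by simp
    also have "\<dots> \<le> (\<sigma>A\<^sup>2 + \<sigma>T\<^sup>2) * (2 * d / (\<gamma> * \<sigma>T\<^sup>2))"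
      by (rule mult_left_mono[OF A]) simp
    finally show ?thesis using B by linarith
  qed
  then have "(1 - tt \<sigma>A \<sigma>) * \<bar>\<theta> - \<mu>A\<bar> \<le> (\<sigma>A\<^sup>2 + \<sigma>T\<^sup>2) * (2 * d / (\<gamma> * \<sigma>T\<^sup>2)) * \<bar>\<theta> - \<mu>A\<bar>"
    by (rule mult_right_mono) simp
  also have "\<dots> = (2 * (\<sigma>A\<^sup>2 + \<sigma>T\<^sup>2) / \<sigma>T\<^sup>2) * \<bar>\<theta> - \<mu>A\<bar>^3 / \<gamma>"
    using g sT by (simp add: d_def power2_eq_square power3_eq_cube abs_mult_self_eq field_simps)
  finally show ?thesis .
qed

end

context
  fixes \<mu>T \<sigma>T \<mu>A :: real
  assumes sT: "\<sigma>T > 0"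
begin

lemma integrable_abs1: "integrable lborel (\<lambda>\<theta>. normal_density \<mu>T \<sigma>T \<theta> * \<bar>\<theta> - \<mu>A\<bar>)"
proof -
  have i: "integrable lborel (\<lambda>\<theta>. normal_density \<mu>T \<sigma>T \<theta> * \<bar>\<theta> - \<mu>T\<bar> + \<bar>\<mu>T - \<mu>A\<bar> * normal_density \<mu>T \<sigma>T \<theta>)"
    using integrable_normal_moment_abs[OF sT, of \<mu>T 1] integrable_normal_density[OF sT, of \<mu>T] by simp
  show ?thesis
  proof (rule Bochner_Integration.integrable_bound[OF i])
    show "AE x in lborel. norm (normal_density \<mu>T \<sigma>T x * \<bar>x - \<mu>A\<bar>)
        \<le> norm (normal_density \<mu>T \<sigma>T x * \<bar>x - \<mu>T\<bar> + \<bar>\<mu>T - \<mu>A\<bar> * normal_density \<mu>T \<sigma>T x)"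
    proof (rule AE_I2)
      fix x
      have "\<bar>x - \<mu>A\<bar> \<le> \<bar>x - \<mu>T\<bar> + \<bar>\<mu>T - \<mu>A\<bar>" by simp
      then have "normal_density \<mu>T \<sigma>T x * \<bar>x - \<mu>A\<bar> \<le> normal_density \<mu>T \<sigma>T x * (\<bar>x - \<mu>T\<bar> + \<bar>\<mu>T - \<mu>A\<bar>)"
        by (rule mult_left_mono) simp
      then show "norm (normal_density \<mu>T \<sigma>T x * \<bar>x - \<mu>A\<bar>)
        \<le> norm (normal_density \<mu>T \<sigma>T x * \<bar>x - \<mu>T\<bar> + \<bar>\<mu>T - \<mu>A\<bar> * normal_density \<mu>T \<sigma>T x)"
        by (simp add: algebra_simps)
    qed
  qed simp
qed

lemma integrable_F:
  assumes [measurable]: "f \<in> borel_measurable borel" and b: "\<And>\<theta>. \<bar>f \<theta>\<bar> \<le> 1"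
  shows "integrable lborel (\<lambda>\<theta>. normal_density \<mu>T \<sigma>T \<theta> * (f \<theta> * (\<theta> - \<mu>A)))"
proof (rule Bochner_Integration.integrable_bound[OF integrable_abs1])
  show "AE x in lborel. norm (normal_density \<mu>T \<sigma>T x * (f x * (x - \<mu>A))) \<le> norm (normal_density \<mu>T \<sigma>T x * \<bar>x - \<mu>A\<bar>)"
  proof (rule AE_I2)
    fix x
    have "\<bar>f x * (x - \<mu>A)\<bar> \<le> \<bar>x - \<mu>A\<bar>" using b[of x] by (simp add: abs_mult mult_left_le_one_le)
    then show "norm (normal_density \<mu>T \<sigma>T x * (f x * (x - \<mu>A))) \<le> norm (normal_density \<mu>T \<sigma>T x * \<bar>x - \<mu>A\<bar>)"
      by (simp add: abs_mult mult_left_mono)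
  qed
qed simp

lemma int_lin: "(\<integral>\<theta>. normal_density \<mu>T \<sigma>T \<theta> * (1 * (\<theta> - \<mu>A)) \<partial>lborel) = \<mu>T - \<mu>A"
proof -
  have "(\<integral>\<theta>. normal_density \<mu>T \<sigma>T \<theta> * (1 * (\<theta> - \<mu>A)) \<partial>lborel)
     = (\<integral>\<theta>. normal_density \<mu>T \<sigma>T \<theta> * \<theta> - \<mu>A * normal_density \<mu>T \<sigma>T \<theta> \<partial>lborel)"
    by (simp add: algebra_simps)
  also have "\<dots> = \<mu>T - \<mu>A"
    using integrable_normal_moment_nz_1[OF sT, of \<mu>T] integral_normal_moment_nz_1[OF sT, of \<mu>T]
      integrable_normal_density[OF sT, of \<mu>T] integral_normal_density[OF sT, of \<mu>T] by simp
  finally show ?thesis .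
qed

definition kk :: "real \<Rightarrow> real" where
  "kk x = x * (normal_density \<mu>T \<sigma>T (\<mu>A + x) - normal_density \<mu>T \<sigma>T (\<mu>A - x))"

lemma sym_int:
  assumes [measurable]: "f \<in> borel_measurable borel" and b: "\<And>\<theta>. \<bar>f \<theta>\<bar> \<le> 1"
    and sym: "AE x in lborel. f (\<mu>A - x) = f (\<mu>A + x)"
  shows "(\<integral>\<theta>. normal_density \<mu>T \<sigma>T \<theta> * (f \<theta> * (\<theta> - \<mu>A)) \<partial>lborel)
           = (\<integral>x. f (\<mu>A + x) * kk x \<partial>lborel) / 2"
    and "integrable lborel (\<lambda>x. f (\<mu>A + x) * kk x)"
proof -
  define F where "F \<theta> = normal_density \<mu>T \<sigma>T \<theta> * (f \<theta> * (\<theta> - \<mu>A))" for \<theta>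
  have mF[measurable]: "F \<in> borel_measurable borel" unfolding F_def by measurable
  have iF: "integrable lborel F" unfolding F_def by (rule integrable_F[OF assms(1) b])
  have i1: "integrable lborel (\<lambda>x. F (\<mu>A + 1 * x))" by (rule lborel_integrable_real_affine[OF iF]) simp
  have i2: "integrable lborel (\<lambda>x. F (\<mu>A + (-1) * x))" by (rule lborel_integrable_real_affine[OF iF]) simp
  have e1: "integral\<^sup>L lborel F = (\<integral>x. F (\<mu>A + 1 * x) \<partial>lborel)"
    using lborel_integral_real_affine[of 1 F \<mu>A] by simp
  have e2: "integral\<^sup>L lborel F = (\<integral>x. F (\<mu>A + (-1) * x) \<partial>lborel)"
    using lborel_integral_real_affine[of "-1" F \<mu>A] by simp
  have i3: "integrable lborel (\<lambda>x. F (\<mu>A + 1 * x) + F (\<mu>A + (-1) * x))"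
    using i1 i2 by simp
  have ae: "AE x in lborel. F (\<mu>A + 1 * x) + F (\<mu>A + (-1) * x) = f (\<mu>A + x) * kk x"
    using sym by eventually_elim (simp add: F_def kk_def algebra_simps)
  show "integrable lborel (\<lambda>x. f (\<mu>A + x) * kk x)"
    using integrable_cong_AE[OF _ _ ae] i3 by (auto simp: kk_def)
  have "2 * integral\<^sup>L lborel F = (\<integral>x. F (\<mu>A + 1 * x) + F (\<mu>A + (-1) * x) \<partial>lborel)"
    using e1 e2 i1 i2 by simp
  also have "\<dots> = (\<integral>x. f (\<mu>A + x) * kk x \<partial>lborel)"
    using integral_cong_AE[OF _ _ ae] by (simp add: kk_def)
  finally show "integral\<^sup>L lborel F = (\<integral>x. f (\<mu>A + x) * kk x \<partial>lborel) / 2" by simp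
qed

lemma phi_le:
  assumes "(b - \<mu>T)\<^sup>2 \<le> (a - \<mu>T)\<^sup>2"
  shows "normal_density \<mu>T \<sigma>T a \<le> normal_density \<mu>T \<sigma>T b"
  using assms sT unfolding normal_density_def
  by (intro mult_left_mono) (auto simp: divide_simps)

lemma kk_nonneg: assumes "\<mu>A \<le> \<mu>T" shows "0 \<le> kk x"
proof (cases "x \<ge> 0")
  case True
  have "((\<mu>A - x) - \<mu>T)\<^sup>2 - ((\<mu>A + x) - \<mu>T)\<^sup>2 = 4 * x * (\<mu>T - \<mu>A)" by (simp add: power2_eq_square algebra_simps)
  moreover have "4 * x * (\<mu>T - \<mu>A) \<ge> 0" using True assms by simp
  ultimately have "normal_density \<mu>T \<sigma>T (\<mu>A - x) \<le> normal_density \<mu>T \<sigma>T (\<mu>A + x)"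
    by (intro phi_le) linarith
  then show ?thesis using True by (simp add: kk_def)
next
  case False
  have "((\<mu>A + x) - \<mu>T)\<^sup>2 - ((\<mu>A - x) - \<mu>T)\<^sup>2 = - 4 * x * (\<mu>T - \<mu>A)" by (simp add: power2_eq_square algebra_simps)
  moreover have "- 4 * x * (\<mu>T - \<mu>A) \<ge> 0" using False assms by (simp add: mult_nonpos_nonneg)
  ultimately have "normal_density \<mu>T \<sigma>T (\<mu>A + x) \<le> normal_density \<mu>T \<sigma>T (\<mu>A - x)"
    by (intro phi_le) linarith
  then show ?thesis using False by (simp add: kk_def mult_nonpos_nonpos)
qed

lemma kk_nonpos: assumes "\<mu>T \<le> \<mu>A" shows "kk x \<le> 0"
proof (cases "x \<ge> 0")
  case True
  have "((\<mu>A + x) - \<mu>T)\<^sup>2 - ((\<mu>A - x) - \<mu>T)\<^sup>2 = 4 * x * (\<mu>A - \<mu>T)" by (simp add: power2_eq_square algebra_simps)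
  moreover have "4 * x * (\<mu>A - \<mu>T) \<ge> 0" using True assms by simp
  ultimately have "normal_density \<mu>T \<sigma>T (\<mu>A + x) \<le> normal_density \<mu>T \<sigma>T (\<mu>A - x)"
    by (intro phi_le) linarith
  then show ?thesis using True by (simp add: kk_def mult_nonneg_nonpos)
next
  case False
  have "((\<mu>A - x) - \<mu>T)\<^sup>2 - ((\<mu>A + x) - \<mu>T)\<^sup>2 = - 4 * x * (\<mu>A - \<mu>T)" by (simp add: power2_eq_square algebra_simps)
  moreover have "- 4 * x * (\<mu>A - \<mu>T) \<ge> 0" using False assms by (simp add: mult_nonpos_nonneg)
  ultimately have "normal_density \<mu>T \<sigma>T (\<mu>A - x) \<le> normal_density \<mu>T \<sigma>T (\<mu>A + x)"
    by (intro phi_le) linarith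
  then show ?thesis using False by (simp add: kk_def mult_nonpos_nonneg)
qed

end

definition aa :: "real \<Rightarrow> real \<Rightarrow> real \<Rightarrow> (real \<Rightarrow> real \<Rightarrow> ereal) \<Rightarrow> real \<Rightarrow> ereal \<Rightarrow> real \<Rightarrow> real" where
  "aa \<sigma>T \<mu>A \<sigma>A sel \<gamma> \<Gamma> \<theta> = (if ereal (Lr \<sigma>T \<mu>A \<sigma>A \<gamma> \<theta> (sel \<gamma> \<theta>)) \<le> \<Gamma> then tt \<sigma>A (sel \<gamma> \<theta>) else 0)"

lemma Lr_refl: "Lr \<sigma>T \<mu>A \<sigma>A \<gamma> (\<mu>A - x) \<sigma> = Lr \<sigma>T \<mu>A \<sigma>A \<gamma> (\<mu>A + x) \<sigma>"
  by (simp add: Lr_def)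

context
  fixes \<mu>T \<sigma>T \<mu>A \<sigma>A :: real
    and sel :: "real \<Rightarrow> real \<Rightarrow> ereal"
  assumes sT: "\<sigma>T > 0" and sA: "\<sigma>A > 0"
    and sel_opt: "\<And>\<gamma> \<theta>. \<gamma> > 0 \<Longrightarrow> is_opt_noise \<sigma>T \<mu>A \<sigma>A \<gamma> \<theta> (sel \<gamma> \<theta>)"
    and sel_meas: "\<And>\<gamma>. \<gamma> > 0 \<Longrightarrow> sel \<gamma> \<in> borel_measurable borel"
begin

lemma aa_meas: assumes g: "\<gamma> > 0" shows "aa \<sigma>T \<mu>A \<sigma>A sel \<gamma> \<Gamma> \<in> borel_measurable borel"
proof -
  note [measurable] = sel_meas[OF g]
  show ?thesis unfolding aa_def[abs_def] Lr_def by measurable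
qed

lemma aa_bounds: assumes g: "\<gamma> > 0" shows "0 \<le> aa \<sigma>T \<mu>A \<sigma>A sel \<gamma> \<Gamma> \<theta>" "aa \<sigma>T \<mu>A \<sigma>A sel \<gamma> \<Gamma> \<theta> \<le> 1"
  using tt_bounds[OF sT sA opt_facts(1)[OF sT sA g sel_opt[OF g]]] by (auto simp: aa_def)

lemma soc_eq: assumes g: "\<gamma> > 0"
  shows "soc_bias \<mu>T \<sigma>T \<mu>A \<sigma>A \<gamma> \<Gamma> (sel \<gamma>) =
    \<bar>\<integral>\<theta>. normal_density \<mu>T \<sigma>T \<theta> * (aa \<sigma>T \<mu>A \<sigma>A sel \<gamma> \<Gamma> \<theta> * (\<theta> - \<mu>A)) \<partial>lborel\<bar>"
proof -
  let ?a = "aa \<sigma>T \<mu>A \<sigma>A sel \<gamma> \<Gamma>"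
  note [measurable] = aa_meas[OF g]
  have c: "cond_out_mean \<sigma>T \<mu>A \<sigma>A \<gamma> \<Gamma> \<theta> (sel \<gamma> \<theta>) = \<theta> - ?a \<theta> * (\<theta> - \<mu>A)" for \<theta>
  proof -
    have p: "sel \<gamma> \<theta> > 0" using opt_facts(1)[OF sT sA g sel_opt[OF g]] .
    show ?thesis using cond_eq[OF sT sA p] loss_eq[OF sA p] by (simp add: aa_def)
  qed
  have i: "integrable lborel (\<lambda>\<theta>. normal_density \<mu>T \<sigma>T \<theta> * (?a \<theta> * (\<theta> - \<mu>A)))"
    by (rule integrable_F[OF sT]) (use aa_bounds[OF g] in auto)
  have "mean_out \<mu>T \<sigma>T \<mu>A \<sigma>A \<gamma> \<Gamma> (sel \<gamma>) = (\<integral>\<theta>. \<theta> - ?a \<theta> * (\<theta> - \<mu>A) \<partial>density lborel (normal_density \<mu>T \<sigma>T))"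
    by (simp add: mean_out_def c)
  also have "\<dots> = (\<integral>\<theta>. normal_density \<mu>T \<sigma>T \<theta> * (\<theta> - ?a \<theta> * (\<theta> - \<mu>A)) \<partial>lborel)"
    by (subst integral_density) auto
  also have "\<dots> = (\<integral>\<theta>. normal_density \<mu>T \<sigma>T \<theta> * \<theta> - normal_density \<mu>T \<sigma>T \<theta> * (?a \<theta> * (\<theta> - \<mu>A)) \<partial>lborel)"
    by (simp add: algebra_simps)
  also have "\<dots> = \<mu>T - (\<integral>\<theta>. normal_density \<mu>T \<sigma>T \<theta> * (?a \<theta> * (\<theta> - \<mu>A)) \<partial>lborel)"
    using integrable_normal_moment_nz_1[OF sT, of \<mu>T] integral_normal_moment_nz_1[OF sT, of \<mu>T] i by simp
  finally show ?thesis by (simp add: soc_bias_def)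
qed

lemma sym_ae: assumes g: "\<gamma> > 0"
  shows "AE x in lborel. aa \<sigma>T \<mu>A \<sigma>A sel \<gamma> \<Gamma> (\<mu>A - x) = aa \<sigma>T \<mu>A \<sigma>A sel \<gamma> \<Gamma> (\<mu>A + x)"
proof -
  let ?a = "aa \<sigma>T \<mu>A \<sigma>A sel \<gamma> \<Gamma>"
  let ?o = "sel \<gamma>"
  let ?L = "Lr \<sigma>T \<mu>A \<sigma>A \<gamma>"
  note o = sel_opt[OF g]
  have Leq: "?L (\<mu>A - x) (?o (\<mu>A - x)) = ?L (\<mu>A + x) (?o (\<mu>A + x))" for x
  proof -
    note p1 = opt_facts[OF sT sA g o[of "\<mu>A - x"]] and p2 = opt_facts[OF sT sA g o[of "\<mu>A + x"]]
    have "?L (\<mu>A - x) (?o (\<mu>A - x)) \<le> ?L (\<mu>A - x) (?o (\<mu>A + x))" using p1 p2 by blast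
    moreover have "?L (\<mu>A + x) (?o (\<mu>A + x)) \<le> ?L (\<mu>A + x) (?o (\<mu>A - x))" using p1 p2 by blast
    ultimately show ?thesis by (simp add: Lr_refl)
  qed
  have mono: "max (tt \<sigma>A (?o (\<mu>A - y))) (tt \<sigma>A (?o (\<mu>A + y))) \<le> min (tt \<sigma>A (?o (\<mu>A - x))) (tt \<sigma>A (?o (\<mu>A + x)))"
    if "\<bar>x\<bar> < \<bar>y\<bar>" for x y
  proof -
    have "\<bar>x\<bar>^2 < \<bar>y\<bar>^2" by (rule power_strict_mono[OF that]) auto
    then have lt: "x\<^sup>2 < y\<^sup>2" by simp
    have "tt \<sigma>A (?o \<theta>2) \<le> tt \<sigma>A (?o \<theta>1)" if "\<theta>1 \<in> {\<mu>A - x, \<mu>A + x}" "\<theta>2 \<in> {\<mu>A - y, \<mu>A + y}" for \<theta>1 \<theta>2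
      using opt_mono_d[OF sT sA g o[of \<theta>1] o[of \<theta>2]] that lt by (auto simp: power2_commute)
    then show ?thesis by simp
  qed
  define S where "S = {x. ?a (\<mu>A - x) \<noteq> ?a (\<mu>A + x)}"
  define lo where "lo x = min (tt \<sigma>A (?o (\<mu>A - x))) (tt \<sigma>A (?o (\<mu>A + x)))" for x
  define hi where "hi x = max (tt \<sigma>A (?o (\<mu>A - x))) (tt \<sigma>A (?o (\<mu>A + x)))" for x
  have lohi: "lo x < hi x" if "x \<in> S" for x
  proof -
    have "?a (\<mu>A - x) \<noteq> ?a (\<mu>A + x)" using that by (simp add: S_def)
    then have "tt \<sigma>A (?o (\<mu>A - x)) \<noteq> tt \<sigma>A (?o (\<mu>A + x))"
      using Leq[of x] by (auto simp: aa_def split: if_splits)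
    then show ?thesis by (auto simp: lo_def hi_def)
  qed
  define r where "r x = (SOME q. q \<in> \<rat> \<and> lo x < q \<and> q < hi x)" for x
  have r: "r x \<in> \<rat> \<and> lo x < r x \<and> r x < hi x" if "x \<in> S" for x
    unfolding r_def by (rule someI_ex) (use Rats_dense_in_real[OF lohi[OF that]] in blast)
  have hl: "hi y \<le> lo x" if "\<bar>x\<bar> < \<bar>y\<bar>" for x y
    using mono[OF that] by (simp add: lo_def hi_def)
  have inj: "inj_on r (S \<inter> {0<..})"
  proof (rule inj_onI)
    fix x y assume x: "x \<in> S \<inter> {0<..}" and y: "y \<in> S \<inter> {0<..}" and e: "r x = r y"
    show "x = y"
    proof (rule ccontr)
      assume "x \<noteq> y"
      then consider "x < y" | "y < x" by linarith
      then show False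
      proof cases
        case 1 then have "\<bar>x\<bar> < \<bar>y\<bar>" using x y by auto
        then show False using r[of x] r[of y] x y e hl[of x y] by auto
      next
        case 2 then have "\<bar>y\<bar> < \<bar>x\<bar>" using x y by auto
        then show False using r[of x] r[of y] x y e hl[of y x] by auto
      qed
    qed
  qed
  have "r ` (S \<inter> {0<..}) \<subseteq> \<rat>" using r by auto
  then have "countable (r ` (S \<inter> {0<..}))" using countable_rat countable_subset by blast
  then have cp: "countable (S \<inter> {0<..})" using countable_image_inj_on inj by blast
  have "S \<subseteq> (S \<inter> {0<..}) \<union> uminus ` (S \<inter> {0<..})"
  proof
    fix x assume x: "x \<in> S"
    have "x \<noteq> 0" using x by (auto simp: S_def)
    moreover have "-x \<in> S" using x by (auto simp: S_def)
    ultimately show "x \<in> (S \<inter> {0<..}) \<union> uminus ` (S \<inter> {0<..})"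
      using x by (cases "x > 0") (auto intro!: image_eqI[of x uminus "-x"])
  qed
  then have "countable S" using cp by (meson countable_Un countable_image countable_subset)
  then have "S \<in> null_sets lborel" by (rule countable_imp_null_set_lborel)
  then have "AE x in lborel. x \<notin> S" by (rule AE_not_in)
  then show ?thesis by eventually_elim (simp add: S_def)
qed

end

lemma t1: assumes "s > (0::real)" shows "((\<lambda>\<gamma>. \<gamma> * ln (\<gamma> / (s + \<gamma>))) \<longlongrightarrow> 0) (at_right 0)"
  using assms by real_asymp

lemma cube_le: fixes a b :: real assumes "0 \<le> a" "0 \<le> b" shows "(a + b)^3 \<le> 4 * (a^3 + b^3)"
proof -
  have "0 \<le> 3 * (a + b) * (a - b)\<^sup>2" using assms by simp
  then show ?thesis by (simp add: power2_eq_square power3_eq_cube algebra_simps)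
qed

context
  fixes \<mu>T \<sigma>T \<mu>A \<sigma>A :: real
    and sel :: "real \<Rightarrow> real \<Rightarrow> ereal"
  assumes sT: "\<sigma>T > 0" and sA: "\<sigma>A > 0"
    and sel_opt: "\<And>\<gamma> \<theta>. \<gamma> > 0 \<Longrightarrow> is_opt_noise \<sigma>T \<mu>A \<sigma>A \<gamma> \<theta> (sel \<gamma> \<theta>)"
    and sel_meas: "\<And>\<gamma>. \<gamma> > 0 \<Longrightarrow> sel \<gamma> \<in> borel_measurable borel"
begin

abbreviation II where "II f \<equiv> (\<integral>\<theta>. normal_density \<mu>T \<sigma>T \<theta> * (f \<theta> * (\<theta> - \<mu>A)) \<partial>lborel)"

lemma comp:
  assumes m1[measurable]: "f1 \<in> borel_measurable borel" and m2[measurable]: "f2 \<in> borel_measurable borel"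
    and b1: "\<And>\<theta>. 0 \<le> f1 \<theta>" and le: "\<And>\<theta>. f1 \<theta> \<le> f2 \<theta>" and b2: "\<And>\<theta>. f2 \<theta> \<le> 1"
    and s1: "AE x in lborel. f1 (\<mu>A - x) = f1 (\<mu>A + x)"
    and s2: "AE x in lborel. f2 (\<mu>A - x) = f2 (\<mu>A + x)"
  shows "\<bar>II f1\<bar> \<le> \<bar>II f2\<bar>"
proof -
  have a1: "\<bar>f1 \<theta>\<bar> \<le> 1" for \<theta> using b1[of \<theta>] le[of \<theta>] b2[of \<theta>] by (simp add: abs_le_iff)
  have a2: "\<bar>f2 \<theta>\<bar> \<le> 1" for \<theta> using b1[of \<theta>] le[of \<theta>] b2[of \<theta>] by (simp add: abs_le_iff)
  note e1 = sym_int[where \<mu>T=\<mu>T, OF sT m1 a1 s1] and e2 = sym_int[where \<mu>T=\<mu>T, OF sT m2 a2 s2]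
  let ?k = "kk \<mu>T \<sigma>T \<mu>A"
  show ?thesis
  proof (cases "\<mu>A \<le> \<mu>T")
    case True
    have k: "0 \<le> ?k x" for x using kk_nonneg[OF sT True] .
    have "0 \<le> (\<integral>x. f1 (\<mu>A + x) * ?k x \<partial>lborel)"
      by (rule Bochner_Integration.integral_nonneg) (use k b1 in simp)
    moreover have "(\<integral>x. f1 (\<mu>A + x) * ?k x \<partial>lborel) \<le> (\<integral>x. f2 (\<mu>A + x) * ?k x \<partial>lborel)"
      by (rule integral_mono[OF e1(2) e2(2)]) (use k le in \<open>simp add: mult_right_mono\<close>)
    ultimately show ?thesis using e1(1) e2(1) by simp
  next
    case False
    have k: "?k x \<le> 0" for x using kk_nonpos[OF sT] False by simp
    have "(\<integral>x. f1 (\<mu>A + x) * ?k x \<partial>lborel) \<le> 0"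
    proof -
      have "0 \<le> (\<integral>x. - (f1 (\<mu>A + x) * ?k x) \<partial>lborel)"
        by (rule Bochner_Integration.integral_nonneg) (use k b1 in \<open>simp add: mult_nonneg_nonpos\<close>)
      then show ?thesis by simp
    qed
    moreover have "(\<integral>x. f2 (\<mu>A + x) * ?k x \<partial>lborel) \<le> (\<integral>x. f1 (\<mu>A + x) * ?k x \<partial>lborel)"
      by (rule integral_mono[OF e2(2) e1(2)]) (use k le in \<open>simp add: mult_right_mono_neg\<close>)
    ultimately show ?thesis using e1(1) e2(1) by simp
  qed
qed

lemma part1: assumes g: "\<gamma> > 0"
  shows "soc_bias \<mu>T \<sigma>T \<mu>A \<sigma>A \<gamma> \<Gamma> (sel \<gamma>) \<le> \<bar>\<mu>A - \<mu>T\<bar>"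
proof -
  have "\<bar>II (aa \<sigma>T \<mu>A \<sigma>A sel \<gamma> \<Gamma>)\<bar> \<le> \<bar>II (\<lambda>_. 1)\<bar>"
    by (rule comp[OF aa_meas[OF sT sA sel_opt sel_meas g]])
       (use aa_bounds[OF sT sA sel_opt sel_meas g] sym_ae[OF sT sA sel_opt sel_meas g] in auto)
  also have "\<dots> = \<bar>\<mu>A - \<mu>T\<bar>" using int_lin[OF sT, of \<mu>T \<mu>A] by simp
  finally show ?thesis using soc_eq[OF sT sA sel_opt sel_meas g] by simp
qed

lemma part4: assumes g: "0 < \<gamma>1" "\<gamma>1 \<le> \<gamma>2"
  shows "soc_bias \<mu>T \<sigma>T \<mu>A \<sigma>A \<gamma>1 \<infinity> (sel \<gamma>1) \<le> soc_bias \<mu>T \<sigma>T \<mu>A \<sigma>A \<gamma>2 \<infinity> (sel \<gamma>2)"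
proof -
  have g2: "\<gamma>2 > 0" using g by simp
  have le: "aa \<sigma>T \<mu>A \<sigma>A sel \<gamma>1 \<infinity> \<theta> \<le> aa \<sigma>T \<mu>A \<sigma>A sel \<gamma>2 \<infinity> \<theta>" for \<theta>
  proof (cases "\<gamma>1 = \<gamma>2")
    case False
    then have "\<gamma>1 < \<gamma>2" using g by simp
    then show ?thesis using opt_mono_g[OF sT sA g(1) _ sel_opt[OF g(1)] sel_opt[OF g2]] by (simp add: aa_def)
  qed simp
  have "\<bar>II (aa \<sigma>T \<mu>A \<sigma>A sel \<gamma>1 \<infinity>)\<bar> \<le> \<bar>II (aa \<sigma>T \<mu>A \<sigma>A sel \<gamma>2 \<infinity>)\<bar>"
    by (rule comp[OF aa_meas[OF sT sA sel_opt sel_meas g(1)] aa_meas[OF sT sA sel_opt sel_meas g2]])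
       (use aa_bounds[OF sT sA sel_opt sel_meas g(1)] aa_bounds[OF sT sA sel_opt sel_meas g2]
         sym_ae[OF sT sA sel_opt sel_meas g(1)] sym_ae[OF sT sA sel_opt sel_meas g2] le in auto)
  then show ?thesis using soc_eq[OF sT sA sel_opt sel_meas g(1)] soc_eq[OF sT sA sel_opt sel_meas g2] by simp
qed

end

context
  fixes \<mu>T \<sigma>T \<mu>A \<sigma>A :: real
    and sel :: "real \<Rightarrow> real \<Rightarrow> ereal"
  assumes sT: "\<sigma>T > 0" and sA: "\<sigma>A > 0"
    and sel_opt: "\<And>\<gamma> \<theta>. \<gamma> > 0 \<Longrightarrow> is_opt_noise \<sigma>T \<mu>A \<sigma>A \<gamma> \<theta> (sel \<gamma> \<theta>)"
    and sel_meas: "\<And>\<gamma>. \<gamma> > 0 \<Longrightarrow> sel \<gamma> \<in> borel_measurable borel"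
begin

lemma generic_bound:
  assumes g: "\<gamma> > 0" and ib: "integrable lborel (\<lambda>\<theta>. normal_density \<mu>T \<sigma>T \<theta> * B \<theta>)"
    and pw: "\<And>\<theta>. aa \<sigma>T \<mu>A \<sigma>A sel \<gamma> \<Gamma> \<theta> * \<bar>\<theta> - \<mu>A\<bar> \<le> B \<theta>"
  shows "soc_bias \<mu>T \<sigma>T \<mu>A \<sigma>A \<gamma> \<Gamma> (sel \<gamma>) \<le> (\<integral>\<theta>. normal_density \<mu>T \<sigma>T \<theta> * B \<theta> \<partial>lborel)"
proof -
  note ab = aa_bounds[OF sT sA sel_opt sel_meas g]
  have i: "integrable lborel (\<lambda>\<theta>. normal_density \<mu>T \<sigma>T \<theta> * (aa \<sigma>T \<mu>A \<sigma>A sel \<gamma> \<Gamma> \<theta> * (\<theta> - \<mu>A)))"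
    by (rule integrable_F[OF sT aa_meas[OF sT sA sel_opt sel_meas g]]) (use ab in auto)
  have "\<bar>normal_density \<mu>T \<sigma>T \<theta> * (aa \<sigma>T \<mu>A \<sigma>A sel \<gamma> \<Gamma> \<theta> * (\<theta> - \<mu>A))\<bar> \<le> normal_density \<mu>T \<sigma>T \<theta> * B \<theta>" for \<theta>
  proof -
    have "\<bar>normal_density \<mu>T \<sigma>T \<theta> * (aa \<sigma>T \<mu>A \<sigma>A sel \<gamma> \<Gamma> \<theta> * (\<theta> - \<mu>A))\<bar>
        = normal_density \<mu>T \<sigma>T \<theta> * (aa \<sigma>T \<mu>A \<sigma>A sel \<gamma> \<Gamma> \<theta> * \<bar>\<theta> - \<mu>A\<bar>)"
      using ab(1)[where \<theta>=\<theta> and \<Gamma>=\<Gamma>] by (simp add: abs_mult)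
    also have "\<dots> \<le> normal_density \<mu>T \<sigma>T \<theta> * B \<theta>" by (rule mult_left_mono[OF pw]) simp
    finally show ?thesis .
  qed
  then have "\<bar>II \<mu>T \<sigma>T \<mu>A (aa \<sigma>T \<mu>A \<sigma>A sel \<gamma> \<Gamma>)\<bar> \<le> (\<integral>\<theta>. normal_density \<mu>T \<sigma>T \<theta> * B \<theta> \<partial>lborel)"
    by (intro integral_abs_bound_integral[OF i ib]) auto
  then show ?thesis using soc_eq[OF sT sA sel_opt sel_meas g] by simp
qed

lemma part2b: assumes g: "\<gamma> > 0" and G: "G > 0"
  shows "soc_bias \<mu>T \<sigma>T \<mu>A \<sigma>A \<gamma> (ereal G) (sel \<gamma>) \<le> sqrt G"
proof -
  have "soc_bias \<mu>T \<sigma>T \<mu>A \<sigma>A \<gamma> (ereal G) (sel \<gamma>) \<le> (\<integral>\<theta>. normal_density \<mu>T \<sigma>T \<theta> * sqrt G \<partial>lborel)"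
  proof (rule generic_bound[OF g])
    show "integrable lborel (\<lambda>\<theta>. normal_density \<mu>T \<sigma>T \<theta> * sqrt G)"
      using integrable_normal_density[OF sT, of \<mu>T] by simp
    fix \<theta>
    show "aa \<sigma>T \<mu>A \<sigma>A sel \<gamma> (ereal G) \<theta> * \<bar>\<theta> - \<mu>A\<bar> \<le> sqrt G"
      using opt_bound_Gamma[OF sT sA g sel_opt[OF g], of \<theta> G] G by (auto simp: aa_def)
  qed
  then show ?thesis using integral_normal_density[OF sT, of \<mu>T] by simp
qed

definition M1 where "M1 = (\<integral>\<theta>. normal_density \<mu>T \<sigma>T \<theta> * \<bar>\<theta> - \<mu>A\<bar> \<partial>lborel)"
definition hh where "hh \<gamma> = \<gamma> + \<gamma> * (- 1/2 * ln (\<gamma> / (\<sigma>T\<^sup>2 + \<gamma>)))" for \<gamma>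

lemma part2a: assumes g: "\<gamma> > 0"
  shows "soc_bias \<mu>T \<sigma>T \<mu>A \<sigma>A \<gamma> \<Gamma> (sel \<gamma>) \<le> \<gamma> / \<sigma>A\<^sup>2 * M1 + sqrt (hh \<gamma>)"
proof -
  let ?B = "\<lambda>\<theta>. \<gamma> / \<sigma>A\<^sup>2 * \<bar>\<theta> - \<mu>A\<bar> + sqrt (hh \<gamma>)"
  have s0: "ereal (sqrt \<gamma>) > 0" using g by simp
  have cc0: "cc \<sigma>T (ereal (sqrt \<gamma>)) = - 1/2 * ln (\<gamma> / (\<sigma>T\<^sup>2 + \<gamma>))" using g by (simp add: cc_def)
  have hnn: "0 \<le> hh \<gamma>" using cc_nonneg[OF sT sA s0] cc0 g by (simp add: hh_def)
  have "soc_bias \<mu>T \<sigma>T \<mu>A \<sigma>A \<gamma> \<Gamma> (sel \<gamma>) \<le> (\<integral>\<theta>. normal_density \<mu>T \<sigma>T \<theta> * ?B \<theta> \<partial>lborel)"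
  proof (rule generic_bound[OF g])
    show "integrable lborel (\<lambda>\<theta>. normal_density \<mu>T \<sigma>T \<theta> * ?B \<theta>)"
    proof -
      have e: "(\<lambda>\<theta>. normal_density \<mu>T \<sigma>T \<theta> * ?B \<theta>) = (\<lambda>\<theta>. \<gamma> / \<sigma>A\<^sup>2 * (normal_density \<mu>T \<sigma>T \<theta> * \<bar>\<theta> - \<mu>A\<bar>) + sqrt (hh \<gamma>) * normal_density \<mu>T \<sigma>T \<theta>)"
        by (auto simp: fun_eq_iff algebra_simps)
      show ?thesis unfolding e
        using integrable_abs1[OF sT, of \<mu>T \<mu>A] integrable_normal_density[OF sT, of \<mu>T]
        by (intro Bochner_Integration.integrable_add Bochner_Integration.integrable_mult_right Bochner_Integration.integrable_mult_left) auto
    qed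
    fix \<theta>
    note ab = aa_bounds[OF sT sA sel_opt sel_meas g]
    have p: "sel \<gamma> \<theta> > 0" using opt_facts(1)[OF sT sA g sel_opt[OF g]] .
    have "aa \<sigma>T \<mu>A \<sigma>A sel \<gamma> \<Gamma> \<theta> * \<bar>\<theta> - \<mu>A\<bar> \<le> tt \<sigma>A (sel \<gamma> \<theta>) * \<bar>\<theta> - \<mu>A\<bar>"
      using tt_bounds[OF sT sA p] by (auto simp: aa_def)
    also have "\<dots> \<le> sqrt (Lr \<sigma>T \<mu>A \<sigma>A \<gamma> \<theta> (ereal (sqrt \<gamma>)))"
      by (rule opt_bound_sqrt[OF sT sA g sel_opt[OF g] s0])
    also have "\<dots> \<le> sqrt ((\<gamma> / \<sigma>A\<^sup>2 * \<bar>\<theta> - \<mu>A\<bar>)\<^sup>2 + hh \<gamma>)"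
    proof -
      have t0: "tt \<sigma>A (ereal (sqrt \<gamma>)) = \<gamma> / (\<sigma>A\<^sup>2 + \<gamma>)" using g by (simp add: tt_def)
      have w0: "ww \<sigma>A (ereal (sqrt \<gamma>)) = (\<sigma>A\<^sup>2 / (\<sigma>A\<^sup>2 + \<gamma>))\<^sup>2 * \<gamma>" using g by (simp add: ww_def)
      have pos: "\<sigma>A\<^sup>2 + \<gamma> > 0" using g sA by (simp add: add_pos_pos)
      have a: "\<gamma> / (\<sigma>A\<^sup>2 + \<gamma>) \<le> \<gamma> / \<sigma>A\<^sup>2"
        using g sA pos by (intro divide_left_mono) (auto intro: mult_pos_pos)
      have a2: "(\<gamma> / (\<sigma>A\<^sup>2 + \<gamma>))\<^sup>2 \<le> (\<gamma> / \<sigma>A\<^sup>2)\<^sup>2"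
        using a g pos by (intro power_mono) auto
      have b: "(\<sigma>A\<^sup>2 / (\<sigma>A\<^sup>2 + \<gamma>))\<^sup>2 \<le> 1"
        using g pos by (intro power_le_one) (auto simp: divide_simps)
      have b2: "(\<sigma>A\<^sup>2 / (\<sigma>A\<^sup>2 + \<gamma>))\<^sup>2 * \<gamma> \<le> \<gamma>"
        using mult_right_mono[OF b, of \<gamma>] g by simp
      have "Lr \<sigma>T \<mu>A \<sigma>A \<gamma> \<theta> (ereal (sqrt \<gamma>)) \<le> (\<gamma> / \<sigma>A\<^sup>2)\<^sup>2 * (\<mu>A - \<theta>)\<^sup>2 + \<gamma> + \<gamma> * cc \<sigma>T (ereal (sqrt \<gamma>))"
        unfolding Lr_def t0 w0 using b2 mult_right_mono[OF a2, of "(\<mu>A - \<theta>)\<^sup>2"] by simp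
      also have "\<dots> = (\<gamma> / \<sigma>A\<^sup>2 * \<bar>\<theta> - \<mu>A\<bar>)\<^sup>2 + hh \<gamma>"
        by (simp add: hh_def cc0 power_mult_distrib power_divide power2_commute)
      finally show ?thesis by simp
    qed
    also have "\<dots> \<le> sqrt ((\<gamma> / \<sigma>A\<^sup>2 * \<bar>\<theta> - \<mu>A\<bar>)\<^sup>2) + sqrt (hh \<gamma>)"
      by (rule sqrt_add_le_add_sqrt) (use hnn in auto)
    also have "\<dots> = ?B \<theta>" using g by simp
    finally show "aa \<sigma>T \<mu>A \<sigma>A sel \<gamma> \<Gamma> \<theta> * \<bar>\<theta> - \<mu>A\<bar> \<le> ?B \<theta>" .
  qed
  also have "(\<integral>\<theta>. normal_density \<mu>T \<sigma>T \<theta> * ?B \<theta> \<partial>lborel) = \<gamma> / \<sigma>A\<^sup>2 * M1 + sqrt (hh \<gamma>)"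
  proof -
    have "(\<integral>\<theta>. normal_density \<mu>T \<sigma>T \<theta> * ?B \<theta> \<partial>lborel)
       = (\<integral>\<theta>. \<gamma> / \<sigma>A\<^sup>2 * (normal_density \<mu>T \<sigma>T \<theta> * \<bar>\<theta> - \<mu>A\<bar>) + sqrt (hh \<gamma>) * normal_density \<mu>T \<sigma>T \<theta> \<partial>lborel)"
      by (simp add: algebra_simps)
    also have "\<dots> = \<gamma> / \<sigma>A\<^sup>2 * M1 + sqrt (hh \<gamma>)"
      using integrable_abs1[OF sT, of \<mu>T \<mu>A] integrable_normal_density[OF sT, of \<mu>T]
        integral_normal_density[OF sT, of \<mu>T] by (simp add: M1_def)
    finally show ?thesis .
  qed
  finally show ?thesis .
qed

end

context
  fixes \<mu>T \<sigma>T \<mu>A \<sigma>A :: real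
    and sel :: "real \<Rightarrow> real \<Rightarrow> ereal"
  assumes sT: "\<sigma>T > 0" and sA: "\<sigma>A > 0"
    and sel_opt: "\<And>\<gamma> \<theta>. \<gamma> > 0 \<Longrightarrow> is_opt_noise \<sigma>T \<mu>A \<sigma>A \<gamma> \<theta> (sel \<gamma> \<theta>)"
    and sel_meas: "\<And>\<gamma>. \<gamma> > 0 \<Longrightarrow> sel \<gamma> \<in> borel_measurable borel"
begin

lemma integrable3: "integrable lborel (\<lambda>\<theta>. normal_density \<mu>T \<sigma>T \<theta> * \<bar>\<theta> - \<mu>A\<bar>^3)"
proof -
  have i: "integrable lborel (\<lambda>\<theta>. 4 * (normal_density \<mu>T \<sigma>T \<theta> * \<bar>\<theta> - \<mu>T\<bar>^3) + (4 * \<bar>\<mu>T - \<mu>A\<bar>^3) * normal_density \<mu>T \<sigma>T \<theta>)"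
    using integrable_normal_moment_abs[OF sT, of \<mu>T 3] integrable_normal_density[OF sT, of \<mu>T]
    by (intro Bochner_Integration.integrable_add Bochner_Integration.integrable_mult_right Bochner_Integration.integrable_mult_left) auto
  show ?thesis
  proof (rule Bochner_Integration.integrable_bound[OF i])
    show "AE x in lborel. norm (normal_density \<mu>T \<sigma>T x * \<bar>x - \<mu>A\<bar>^3)
        \<le> norm (4 * (normal_density \<mu>T \<sigma>T x * \<bar>x - \<mu>T\<bar>^3) + (4 * \<bar>\<mu>T - \<mu>A\<bar>^3) * normal_density \<mu>T \<sigma>T x)"
    proof (rule AE_I2)
      fix x
      have "\<bar>x - \<mu>A\<bar>^3 \<le> (\<bar>x - \<mu>T\<bar> + \<bar>\<mu>T - \<mu>A\<bar>)^3"
        by (rule power_mono) auto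
      also have "\<dots> \<le> 4 * (\<bar>x - \<mu>T\<bar>^3 + \<bar>\<mu>T - \<mu>A\<bar>^3)" by (rule cube_le) auto
      finally have "normal_density \<mu>T \<sigma>T x * \<bar>x - \<mu>A\<bar>^3 \<le> normal_density \<mu>T \<sigma>T x * (4 * (\<bar>x - \<mu>T\<bar>^3 + \<bar>\<mu>T - \<mu>A\<bar>^3))"
        by (rule mult_left_mono) simp
      then show "norm (normal_density \<mu>T \<sigma>T x * \<bar>x - \<mu>A\<bar>^3)
        \<le> norm (4 * (normal_density \<mu>T \<sigma>T x * \<bar>x - \<mu>T\<bar>^3) + (4 * \<bar>\<mu>T - \<mu>A\<bar>^3) * normal_density \<mu>T \<sigma>T x)"
        by (simp add: algebra_simps)
    qed
  qed simp
qed

definition M3 where "M3 = (\<integral>\<theta>. normal_density \<mu>T \<sigma>T \<theta> * \<bar>\<theta> - \<mu>A\<bar>^3 \<partial>lborel)"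
definition CC where "CC = 2 * (\<sigma>A\<^sup>2 + \<sigma>T\<^sup>2) / \<sigma>T\<^sup>2"

lemma part3: assumes g: "\<gamma> > 0"
  shows "\<bar>soc_bias \<mu>T \<sigma>T \<mu>A \<sigma>A \<gamma> \<infinity> (sel \<gamma>) - \<bar>\<mu>A - \<mu>T\<bar>\<bar> \<le> CC * M3 / \<gamma>"
proof -
  let ?a = "aa \<sigma>T \<mu>A \<sigma>A sel \<gamma> \<infinity>"
  let ?p = "normal_density \<mu>T \<sigma>T"
  note ab = aa_bounds[OF sT sA sel_opt sel_meas g]
  have ia: "integrable lborel (\<lambda>\<theta>. ?p \<theta> * (?a \<theta> * (\<theta> - \<mu>A)))"
    by (rule integrable_F[OF sT aa_meas[OF sT sA sel_opt sel_meas g]]) (use ab in auto)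
  have i1: "integrable lborel (\<lambda>\<theta>. ?p \<theta> * (1 * (\<theta> - \<mu>A)))"
    by (rule integrable_F[OF sT]) auto
  have ib: "integrable lborel (\<lambda>\<theta>. CC / \<gamma> * (?p \<theta> * \<bar>\<theta> - \<mu>A\<bar>^3))"
    using integrable3 by simp
  have d: "II \<mu>T \<sigma>T \<mu>A ?a - II \<mu>T \<sigma>T \<mu>A (\<lambda>_. 1) = (\<integral>\<theta>. ?p \<theta> * (?a \<theta> * (\<theta> - \<mu>A)) - ?p \<theta> * (1 * (\<theta> - \<mu>A)) \<partial>lborel)"
    using ia i1 by simp
  have "\<bar>\<integral>\<theta>. ?p \<theta> * (?a \<theta> * (\<theta> - \<mu>A)) - ?p \<theta> * (1 * (\<theta> - \<mu>A)) \<partial>lborel\<bar> \<le> (\<integral>\<theta>. CC / \<gamma> * (?p \<theta> * \<bar>\<theta> - \<mu>A\<bar>^3) \<partial>lborel)"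
  proof (rule integral_abs_bound_integral)
    show "integrable lborel (\<lambda>\<theta>. ?p \<theta> * (?a \<theta> * (\<theta> - \<mu>A)) - ?p \<theta> * (1 * (\<theta> - \<mu>A)))"
      using ia i1 by simp
    show "integrable lborel (\<lambda>\<theta>. CC / \<gamma> * (?p \<theta> * \<bar>\<theta> - \<mu>A\<bar>^3))" by (rule ib)
    fix \<theta>
    have e: "?a \<theta> = tt \<sigma>A (sel \<gamma> \<theta>)" by (simp add: aa_def)
    have "\<bar>?p \<theta> * (?a \<theta> * (\<theta> - \<mu>A)) - ?p \<theta> * (1 * (\<theta> - \<mu>A))\<bar> = ?p \<theta> * ((1 - ?a \<theta>) * \<bar>\<theta> - \<mu>A\<bar>)"
    proof -
      have "?p \<theta> * (?a \<theta> * (\<theta> - \<mu>A)) - ?p \<theta> * (1 * (\<theta> - \<mu>A)) = ?p \<theta> * ((?a \<theta> - 1) * (\<theta> - \<mu>A))"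
        by (simp add: algebra_simps)
      moreover have "\<bar>?a \<theta> - 1\<bar> = 1 - ?a \<theta>" using ab(2)[where \<theta>=\<theta> and \<Gamma>=\<infinity>] by simp
      ultimately show ?thesis by (simp add: abs_mult)
    qed
    also have "\<dots> \<le> ?p \<theta> * (CC * \<bar>\<theta> - \<mu>A\<bar>^3 / \<gamma>)"
      unfolding e CC_def by (rule mult_left_mono[OF opt_bound_large[OF sT sA g sel_opt[OF g]]]) simp
    also have "\<dots> = CC / \<gamma> * (?p \<theta> * \<bar>\<theta> - \<mu>A\<bar>^3)" by simp
    finally show "\<bar>?p \<theta> * (?a \<theta> * (\<theta> - \<mu>A)) - ?p \<theta> * (1 * (\<theta> - \<mu>A))\<bar> \<le> CC / \<gamma> * (?p \<theta> * \<bar>\<theta> - \<mu>A\<bar>^3)" .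
  qed
  also have "\<dots> = CC * M3 / \<gamma>" by (simp add: M3_def)
  finally have "\<bar>II \<mu>T \<sigma>T \<mu>A ?a - II \<mu>T \<sigma>T \<mu>A (\<lambda>_. 1)\<bar> \<le> CC * M3 / \<gamma>" using d by simp
  moreover have "II \<mu>T \<sigma>T \<mu>A (\<lambda>_. 1) = \<mu>T - \<mu>A" using int_lin[OF sT, of \<mu>T \<mu>A] by simp
  moreover have "soc_bias \<mu>T \<sigma>T \<mu>A \<sigma>A \<gamma> \<infinity> (sel \<gamma>) = \<bar>II \<mu>T \<sigma>T \<mu>A ?a\<bar>"
    using soc_eq[OF sT sA sel_opt sel_meas g] by simp
  ultimately show ?thesis by linarith
qed

end

context
  fixes \<mu>T \<sigma>T \<mu>A \<sigma>A :: real
    and sel :: "real \<Rightarrow> real \<Rightarrow> ereal"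
  assumes sT: "\<sigma>T > 0" and sA: "\<sigma>A > 0"
    and sel_opt: "\<And>\<gamma> \<theta>. \<gamma> > 0 \<Longrightarrow> is_opt_noise \<sigma>T \<mu>A \<sigma>A \<gamma> \<theta> (sel \<gamma> \<theta>)"
    and sel_meas: "\<And>\<gamma>. \<gamma> > 0 \<Longrightarrow> sel \<gamma> \<in> borel_measurable borel"
begin

lemma main:
  shows "(\<forall>\<gamma> \<Gamma>. \<gamma> > 0 \<longrightarrow> \<Gamma> > 0 \<longrightarrow>
            soc_bias \<mu>T \<sigma>T \<mu>A \<sigma>A \<gamma> \<Gamma> (sel \<gamma>) \<le> \<bar>\<mu>A - \<mu>T\<bar>)
       \<and> (\<forall>\<Gamma>. \<Gamma> > 0 \<longrightarrow>
            ((\<lambda>\<gamma>. soc_bias \<mu>T \<sigma>T \<mu>A \<sigma>A \<gamma> \<Gamma> (sel \<gamma>)) \<longlongrightarrow> 0) (at_right 0))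
       \<and> (\<forall>\<gamma>. \<gamma> > 0 \<longrightarrow>
            ((\<lambda>\<Gamma>. soc_bias \<mu>T \<sigma>T \<mu>A \<sigma>A \<gamma> (ereal \<Gamma>) (sel \<gamma>)) \<longlongrightarrow> 0) (at_right 0))
       \<and> ((\<lambda>\<gamma>. soc_bias \<mu>T \<sigma>T \<mu>A \<sigma>A \<gamma> \<infinity> (sel \<gamma>)) \<longlongrightarrow> \<bar>\<mu>A - \<mu>T\<bar>) at_top
       \<and> (\<forall>\<gamma>1 \<gamma>2. 0 < \<gamma>1 \<longrightarrow> \<gamma>1 \<le> \<gamma>2 \<longrightarrow>
            soc_bias \<mu>T \<sigma>T \<mu>A \<sigma>A \<gamma>1 \<infinity> (sel \<gamma>1) \<le> soc_bias \<mu>T \<sigma>T \<mu>A \<sigma>A \<gamma>2 \<infinity> (sel \<gamma>2))"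
proof (intro conjI allI impI)
  fix \<gamma> :: real and \<Gamma> :: ereal assume "\<gamma> > 0" "\<Gamma> > 0"
  then show "soc_bias \<mu>T \<sigma>T \<mu>A \<sigma>A \<gamma> \<Gamma> (sel \<gamma>) \<le> \<bar>\<mu>A - \<mu>T\<bar>"
    using part1[OF sT sA sel_opt sel_meas] by blast
next
  fix \<gamma>1 \<gamma>2 :: real assume "0 < \<gamma>1" "\<gamma>1 \<le> \<gamma>2"
  then show "soc_bias \<mu>T \<sigma>T \<mu>A \<sigma>A \<gamma>1 \<infinity> (sel \<gamma>1) \<le> soc_bias \<mu>T \<sigma>T \<mu>A \<sigma>A \<gamma>2 \<infinity> (sel \<gamma>2)"
    using part4[OF sT sA sel_opt sel_meas] by blast
next
  fix \<Gamma> :: ereal assume "\<Gamma> > 0"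
  have ev: "eventually (\<lambda>\<gamma>. \<gamma> > (0::real)) (at_right 0)" by (simp add: eventually_at_right_less)
  have h: "((\<lambda>\<gamma>. hh \<sigma>T \<gamma>) \<longlongrightarrow> 0) (at_right 0)"
  proof -
    have "((\<lambda>\<gamma>. \<gamma> + (-1/2) * (\<gamma> * ln (\<gamma> / (\<sigma>T\<^sup>2 + \<gamma>)))) \<longlongrightarrow> 0 + (-1/2) * 0) (at_right 0)"
      using sT by (intro tendsto_intros t1 tendsto_ident_at) simp
    moreover have e: "(\<lambda>\<gamma>. hh \<sigma>T \<gamma>) = (\<lambda>\<gamma>. \<gamma> + (-1/2) * (\<gamma> * ln (\<gamma> / (\<sigma>T\<^sup>2 + \<gamma>))))"
      by (auto simp: fun_eq_iff hh_def[OF sT sA sel_opt sel_meas] algebra_simps)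
    ultimately show ?thesis by simp
  qed
  have b: "((\<lambda>\<gamma>. \<gamma> / \<sigma>A\<^sup>2 * M1 \<mu>T \<sigma>T \<mu>A + sqrt (hh \<sigma>T \<gamma>)) \<longlongrightarrow> 0 / \<sigma>A\<^sup>2 * M1 \<mu>T \<sigma>T \<mu>A + sqrt 0) (at_right 0)"
    using sA by (intro tendsto_intros h) auto
  show "((\<lambda>\<gamma>. soc_bias \<mu>T \<sigma>T \<mu>A \<sigma>A \<gamma> \<Gamma> (sel \<gamma>)) \<longlongrightarrow> 0) (at_right 0)"
  proof (rule tendsto_sandwich[OF _ _ tendsto_const])
    show "eventually (\<lambda>\<gamma>. 0 \<le> soc_bias \<mu>T \<sigma>T \<mu>A \<sigma>A \<gamma> \<Gamma> (sel \<gamma>)) (at_right 0)"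
      by (simp add: soc_bias_def)
    show "eventually (\<lambda>\<gamma>. soc_bias \<mu>T \<sigma>T \<mu>A \<sigma>A \<gamma> \<Gamma> (sel \<gamma>) \<le> \<gamma> / \<sigma>A\<^sup>2 * M1 \<mu>T \<sigma>T \<mu>A + sqrt (hh \<sigma>T \<gamma>)) (at_right 0)"
      using ev by eventually_elim (rule part2a[OF sT sA sel_opt sel_meas])
    show "((\<lambda>\<gamma>. \<gamma> / \<sigma>A\<^sup>2 * M1 \<mu>T \<sigma>T \<mu>A + sqrt (hh \<sigma>T \<gamma>)) \<longlongrightarrow> 0) (at_right 0)"
      using b by simp
  qed
next
  fix \<gamma> :: real assume g: "\<gamma> > 0"
  have ev: "eventually (\<lambda>G. G > (0::real)) (at_right 0)" by (simp add: eventually_at_right_less)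
  have b: "((\<lambda>G. sqrt G) \<longlongrightarrow> sqrt 0) (at_right 0)"
    by (intro tendsto_intros tendsto_ident_at)
  show "((\<lambda>\<Gamma>. soc_bias \<mu>T \<sigma>T \<mu>A \<sigma>A \<gamma> (ereal \<Gamma>) (sel \<gamma>)) \<longlongrightarrow> 0) (at_right 0)"
  proof (rule tendsto_sandwich[OF _ _ tendsto_const])
    show "eventually (\<lambda>G. 0 \<le> soc_bias \<mu>T \<sigma>T \<mu>A \<sigma>A \<gamma> (ereal G) (sel \<gamma>)) (at_right 0)"
      by (simp add: soc_bias_def)
    show "eventually (\<lambda>G. soc_bias \<mu>T \<sigma>T \<mu>A \<sigma>A \<gamma> (ereal G) (sel \<gamma>) \<le> sqrt G) (at_right 0)"
      using ev by eventually_elim (rule part2b[OF sT sA sel_opt sel_meas g])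
    show "((\<lambda>G. sqrt G) \<longlongrightarrow> 0) (at_right 0)" using b by simp
  qed
next
  let ?m = "\<bar>\<mu>A - \<mu>T\<bar>"
  let ?B = "\<lambda>\<gamma>::real. CC \<sigma>T \<sigma>A * M3 \<mu>T \<sigma>T \<mu>A / \<gamma>"
  have ev: "eventually (\<lambda>\<gamma>. \<gamma> > (0::real)) at_top" by (rule eventually_gt_at_top)
  have p3: "?m - ?B \<gamma> \<le> soc_bias \<mu>T \<sigma>T \<mu>A \<sigma>A \<gamma> \<infinity> (sel \<gamma>) \<and> soc_bias \<mu>T \<sigma>T \<mu>A \<sigma>A \<gamma> \<infinity> (sel \<gamma>) \<le> ?m + ?B \<gamma>"
    if g: "\<gamma> > 0" for \<gamma>
    using part3[where \<mu>T=\<mu>T, OF sT sA sel_opt sel_meas g] by (simp add: abs_le_iff)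
  have B: "(?B \<longlongrightarrow> 0) at_top"
    by (intro tendsto_divide_0[OF tendsto_const] filterlim_at_top_imp_at_infinity[OF filterlim_ident])
  have l: "((\<lambda>\<gamma>. ?m - ?B \<gamma>) \<longlongrightarrow> ?m - 0) at_top" by (intro tendsto_intros B)
  have u: "((\<lambda>\<gamma>. ?m + ?B \<gamma>) \<longlongrightarrow> ?m + 0) at_top" by (intro tendsto_intros B)
  show "((\<lambda>\<gamma>. soc_bias \<mu>T \<sigma>T \<mu>A \<sigma>A \<gamma> \<infinity> (sel \<gamma>)) \<longlongrightarrow> ?m) at_top"
  proof (rule tendsto_sandwich)
    show "eventually (\<lambda>\<gamma>. ?m - ?B \<gamma> \<le> soc_bias \<mu>T \<sigma>T \<mu>A \<sigma>A \<gamma> \<infinity> (sel \<gamma>)) at_top"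
      using ev by eventually_elim (use p3 in blast)
    show "eventually (\<lambda>\<gamma>. soc_bias \<mu>T \<sigma>T \<mu>A \<sigma>A \<gamma> \<infinity> (sel \<gamma>) \<le> ?m + ?B \<gamma>) at_top"
      using ev by eventually_elim (use p3 in blast)
  qed (use l u in simp_all)
qed

end

theorem theorem3:
  fixes \<mu>T \<sigma>T \<mu>A \<sigma>A :: real
    and sel :: "real \<Rightarrow> real \<Rightarrow> ereal"
  assumes "\<sigma>T > 0" and "\<sigma>A > 0"
    and sel_opt: "\<And>\<gamma> \<theta>. \<gamma> > 0 \<Longrightarrow> is_opt_noise \<sigma>T \<mu>A \<sigma>A \<gamma> \<theta> (sel \<gamma> \<theta>)"
    and sel_meas: "\<And>\<gamma>. \<gamma> > 0 \<Longrightarrow> sel \<gamma> \<in> borel_measurable borel"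
  shows "(\<forall>\<gamma> \<Gamma>. \<gamma> > 0 \<longrightarrow> \<Gamma> > 0 \<longrightarrow>
            soc_bias \<mu>T \<sigma>T \<mu>A \<sigma>A \<gamma> \<Gamma> (sel \<gamma>) \<le> \<bar>\<mu>A - \<mu>T\<bar>)
       \<and> (\<forall>\<Gamma>. \<Gamma> > 0 \<longrightarrow>
            ((\<lambda>\<gamma>. soc_bias \<mu>T \<sigma>T \<mu>A \<sigma>A \<gamma> \<Gamma> (sel \<gamma>)) \<longlongrightarrow> 0) (at_right 0))
       \<and> (\<forall>\<gamma>. \<gamma> > 0 \<longrightarrow>
            ((\<lambda>\<Gamma>. soc_bias \<mu>T \<sigma>T \<mu>A \<sigma>A \<gamma> (ereal \<Gamma>) (sel \<gamma>)) \<longlongrightarrow> 0) (at_right 0))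
       \<and> ((\<lambda>\<gamma>. soc_bias \<mu>T \<sigma>T \<mu>A \<sigma>A \<gamma> \<infinity> (sel \<gamma>)) \<longlongrightarrow> \<bar>\<mu>A - \<mu>T\<bar>) at_top
       \<and> (\<forall>\<gamma>1 \<gamma>2. 0 < \<gamma>1 \<longrightarrow> \<gamma>1 \<le> \<gamma>2 \<longrightarrow>
            soc_bias \<mu>T \<sigma>T \<mu>A \<sigma>A \<gamma>1 \<infinity> (sel \<gamma>1) \<le> soc_bias \<mu>T \<sigma>T \<mu>A \<sigma>A \<gamma>2 \<infinity> (sel \<gamma>2))"
  by (rule main[OF assms])

end
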